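(* Consider a fork-join queueing network with nodes $\mathbf N=\{1,\dots,n\}$, topology given by a directed graph $\mathcal G=(\mathbf N,\mathbf A)$, initial buffer contents $r_i\in\{0,1,2,\dots\}\cup\{\infty\}$ with $r_i=\infty$ exactly for the nodes $i$ with $\mathbf P(i)=\emptyset$, and service times $\tau_{ik}>0$ ($i=1,\dots,n$, $k=1,2,\dots$). Let the departure epochs $d_i(k)\in\underline{\mathbb R}$, $k\ge1$, satisfy, for all $i$ and all $k\ge1$, $$d_i(k)=\tau_{ik}\otimes a_i(k)\oplus\tau_{ik}\otimes d_i(k-1),\qquad a_i(k)=\begin{cases}\bigoplus_{j\in\mathbf P(i)} d_j(k-r_i), & \mathbf P(i)\neq\emptyset,\\ \varepsilon, & \mathbf P(i)=\emptyset,\end{cases}$$ with the conventions $d_i(0)=0$ and $d_i(k)=\varepsilon$ for $k<0$. Let $M=\max\{r_i: r_i<\infty\}$ (with $M=0$ if no $r_i$ is finite) and $M'=\max(M,1)$. For each integer $m\ge0$ let $G_m=(g^m_{ij})$ be the $n\times n$ matrix with $g^m_{ij}=0$ if $i\in\mathbf P(j)$ and $r_j=m$, and $g^m_{ij}=\varepsilon$ otherwise, and let $\mathcal G_0$ be the graph associated with $G_0$. Let $\mathcal T_k=\mathrm{diag}(\tau_{1k},\dots,\tau_{nk})$ (off-diagonal entries $\varepsilon$). If $\mathcal G_0$ is acyclic and $p$ is the length of its longest path, then for every $k\ge1$ the vector $\mathbf d(k)=(d_1(k),\dots,d_n(k))^T$ satisfies the explicit equation $$\mathbf d(k)=\bigoplus_{m=1}^{M'}T_m(k)\otimes\mathbf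 d(k-m),$$ where $$T_1(k)=(E\oplus\mathcal T_k\otimes G_0^T)^p\otimes\mathcal T_k\otimes(E\oplus G_1^T),\qquad T_m(k)=(E\oplus\mathcal T_k\otimes G_0^T)^p\otimes\mathcal T_k\otimes G_m^T\ \ (m=2,\dots,M').$$
   Context: Max-plus algebra: on $\underline{\mathbb R}=\mathbb R\cup\{\varepsilon\}$ with $\varepsilon=-\infty$, define $x\oplus y=\max(x,y)$ and $x\otimes y=x+y$ (with $x\otimes\varepsilon=\varepsilon\otimes x=\varepsilon$). For matrices, $(X\oplus Y)_{ij}=x_{ij}\oplus y_{ij}$, $(X\otimes Y)_{ij}=\bigoplus_k x_{ik}\otimes y_{kj}$; matrix–vector products likewise; $\bigoplus$ over an index set denotes iterated $\oplus$ (maximum), and an empty $\oplus$-sum equals $\varepsilon$. $E$ is the $n\times n$ identity (diagonal $0$, off-diagonal $\varepsilon$); $X^0=E$, $X^q=X\otimes X^{q-1}$; $X^T$ is the transpose. The graph associated with an $n\times n$ matrix $X$ has vertices $\{1,\dots,n\}$ and an arc $(i,j)$ iff $x_{ij}\ne\varepsilon$ (loops count as cycles); path length = number of arcs. For the network graph $\mathcal G=(\mathbf N,\mathbf A)$, $\mathbf P(i)=\{j:(j,i)\in\mathbf A\}$ is the set of predecessors of node $i$. Interpretation: $d_i(k)$ is the $k$th departure epoch from node $i$, $a_i(k)$ the $k$th arrival epoch into its queue, $r_i$ the initial number of customers waiting in its buffer; a node with no predecessors represents an infinite external arrival stream. *)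

theory Defs
  imports Main "HOL-Library.Extended_Real"
begin

text \<open>Max-plus algebra on ereal: epsilon = -\<infinity>, oplus = max (Sup), otimes = +.
  All quantities considered are finite or -\<infinity>. Matrices are n x n, indexed by {1..n},
  represented as functions nat \<Rightarrow> nat \<Rightarrow> ereal (entries outside {1..n} are irrelevant).\<close>

type_synonym mpmat = "nat \<Rightarrow> nat \<Rightarrow> ereal"
type_synonym mpvec = "nat \<Rightarrow> ereal"

definition mp_add :: "mpmat \<Rightarrow> mpmat \<Rightarrow> mpmat" where
  "mp_add X Y = (\<lambda>i j. max (X i j) (Y i j))"

definition mp_mult :: "nat \<Rightarrow> mpmat \<Rightarrow> mpmat \<Rightarrow> mpmat" where
  "mp_mult n X Y = (\<lambda>i j. SUP k\<in>{1..n}. X i k + Y k j)"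

definition mp_mult_vec :: "nat \<Rightarrow> mpmat \<Rightarrow> mpvec \<Rightarrow> mpvec" where
  "mp_mult_vec n X v = (\<lambda>i. SUP j\<in>{1..n}. X i j + v j)"

definition mp_id :: mpmat where
  "mp_id = (\<lambda>i j. if i = j then 0 else -\<infinity>)"

fun mp_pow :: "nat \<Rightarrow> mpmat \<Rightarrow> nat \<Rightarrow> mpmat" where
  "mp_pow n X 0 = mp_id"
| "mp_pow n X (Suc q) = mp_mult n X (mp_pow n X q)"

definition mp_transpose :: "mpmat \<Rightarrow> mpmat" where
  "mp_transpose X = (\<lambda>i j. X j i)"

text \<open>Paths in the graph associated with a matrix X: vertex lists with arcs (i,j) iff X i j \<noteq> -\<infinity>.
  The length of the path is (length vs - 1).\<close>
definition mp_path :: "nat \<Rightarrow> mpmat \<Rightarrow> nat list \<Rightarrow> bool" where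
  "mp_path n X vs \<longleftrightarrow> vs \<noteq> [] \<and> set vs \<subseteq> {1..n} \<and>
     (\<forall>l. Suc l < length vs \<longrightarrow> X (vs ! l) (vs ! Suc l) \<noteq> -\<infinity>)"

definition mp_acyclic :: "nat \<Rightarrow> mpmat \<Rightarrow> bool" where
  "mp_acyclic n X \<longleftrightarrow> \<not> (\<exists>vs. mp_path n X vs \<and> length vs \<ge> 2 \<and> hd vs = last vs)"

definition longest_path_length :: "nat \<Rightarrow> mpmat \<Rightarrow> nat \<Rightarrow> bool" where
  "longest_path_length n X p \<longleftrightarrow>
     (\<exists>vs. mp_path n X vs \<and> length vs = Suc p) \<and>
     (\<forall>vs. mp_path n X vs \<longrightarrow> length vs \<le> Suc p)"

definition preds :: "(nat \<times> nat) set \<Rightarrow> nat \<Rightarrow> nat set" where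
  "preds A i = {j. (j, i) \<in> A}"

definition Mfin :: "nat \<Rightarrow> (nat \<Rightarrow> enat) \<Rightarrow> nat" where
  "Mfin n r = Max ({0} \<union> {the_enat (r i) | i. i \<in> {1..n} \<and> r i \<noteq> \<infinity>})"

definition Gmat :: "(nat \<times> nat) set \<Rightarrow> (nat \<Rightarrow> enat) \<Rightarrow> nat \<Rightarrow> mpmat" where
  "Gmat A r m = (\<lambda>i j. if i \<in> preds A j \<and> r j = enat m then 0 else -\<infinity>)"

definition Tdiag :: "(nat \<Rightarrow> nat \<Rightarrow> real) \<Rightarrow> nat \<Rightarrow> mpmat" where
  "Tdiag \<tau> k = (\<lambda>i j. if i = j then ereal (\<tau> i k) else -\<infinity>)"

definition Tm :: "nat \<Rightarrow> (nat \<times> nat) set \<Rightarrow> (nat \<Rightarrow> enat) \<Rightarrow> (nat \<Rightarrow> nat \<Rightarrow> real)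
                  \<Rightarrow> nat \<Rightarrow> nat \<Rightarrow> nat \<Rightarrow> mpmat" where
  "Tm n A r \<tau> p m k =
     mp_mult n (mp_pow n (mp_add mp_id (mp_mult n (Tdiag \<tau> k) (mp_transpose (Gmat A r 0)))) p)
       (mp_mult n (Tdiag \<tau> k)
          (if m = 1 then mp_add mp_id (mp_transpose (Gmat A r 1))
           else mp_transpose (Gmat A r m)))"

definition arrival :: "(nat \<times> nat) set \<Rightarrow> (nat \<Rightarrow> enat) \<Rightarrow> (nat \<Rightarrow> int \<Rightarrow> ereal) \<Rightarrow> nat \<Rightarrow> nat \<Rightarrow> ereal" where
  "arrival A r d i k =
     (if preds A i = {} then -\<infinity>
      else SUP j\<in>preds A i. d j (int k - int (the_enat (r i))))"

end

theory Submission
  imports Defs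
begin


lemma SUP_attained:
  fixes f :: "'a \<Rightarrow> ereal"
  assumes "finite S" "S \<noteq> {}"
  shows "\<exists>s\<in>S. (SUP s\<in>S. f s) = f s"
proof -
  have "Sup (f ` S) = Max (f ` S)" using assms by (simp add: cSup_eq_Max)
  moreover have "Max (f ` S) \<in> f ` S" using assms by simp
  ultimately show ?thesis by auto
qed

lemma SUP_add_left:
  fixes f :: "'a \<Rightarrow> ereal"
  assumes "finite S" "c \<noteq> \<infinity> \<or> S \<noteq> {}"
  shows "c + (SUP s\<in>S. f s) = (SUP s\<in>S. c + f s)"
proof (cases "S = {}")
  case True then show ?thesis using assms by (cases c) (auto simp: bot_ereal_def)
next
  case False
  then obtain s0 where s0: "s0 \<in> S" "(SUP s\<in>S. f s) = f s0" using SUP_attained[OF assms(1)] by blast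
  show ?thesis
  proof (rule antisym)
    show "c + (SUP s\<in>S. f s) \<le> (SUP s\<in>S. c + f s)" using s0 by (auto intro: SUP_upper)
    show "(SUP s\<in>S. c + f s) \<le> c + (SUP s\<in>S. f s)"
      by (rule SUP_least) (simp add: SUP_upper add_left_mono)
  qed
qed

lemma SUP_add_right:
  fixes f :: "'a \<Rightarrow> ereal"
  assumes "finite S" "c \<noteq> \<infinity> \<or> S \<noteq> {}"
  shows "(SUP s\<in>S. f s) + c = (SUP s\<in>S. f s + c)"
  using SUP_add_left[OF assms, of f] by (simp add: add.commute)

lemma SUP_ne_inf:
  fixes f :: "'a \<Rightarrow> ereal"
  assumes "finite S" "\<forall>s\<in>S. f s \<noteq> \<infinity>"
  shows "(SUP s\<in>S. f s) \<noteq> \<infinity>"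
proof (cases "S = {}")
  case True then show ?thesis by (simp add: bot_ereal_def)
next
  case False then show ?thesis using SUP_attained[OF assms(1) False, of f] assms by auto
qed

lemma SUP_if_bot:
  fixes f :: "'a \<Rightarrow> ereal"
  shows "(SUP s\<in>S. if P s then f s else -\<infinity>) = (SUP s\<in>{s\<in>S. P s}. f s)"
proof (rule antisym)
  show "(SUP s\<in>S. if P s then f s else -\<infinity>) \<le> (SUP s\<in>{s\<in>S. P s}. f s)"
  proof (rule SUP_least)
    fix s assume s: "s \<in> S"
    show "(if P s then f s else -\<infinity>) \<le> (SUP s\<in>{s\<in>S. P s}. f s)"
    proof (cases "P s")
      case True
      then have "s \<in> {s\<in>S. P s}" using s by simp
      then show ?thesis using True by (simp add: SUP_upper)
    qed simp
  qed
  show "(SUP s\<in>{s\<in>S. P s}. f s) \<le> (SUP s\<in>S. if P s then f s else -\<infinity>)"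
  proof (rule SUP_least)
    fix s assume s: "s \<in> {s\<in>S. P s}"
    then show "f s \<le> (SUP s\<in>S. if P s then f s else -\<infinity>)"
      using SUP_upper[of s S "\<lambda>s. if P s then f s else -\<infinity>"] by simp
  qed
qed


lemma SUP_max: "(SUP x\<in>A. max (f x) (g x)) = max (SUP x\<in>A. f x) (SUP x\<in>A. (g x::ereal))"
  unfolding sup_max[symmetric] by (rule Complete_Lattices.SUP_sup_distrib[symmetric])

definition matok :: "nat \<Rightarrow> mpmat \<Rightarrow> bool" where
  "matok n X \<longleftrightarrow> (\<forall>i\<in>{1..n}. \<forall>j\<in>{1..n}. X i j \<noteq> \<infinity>)"
definition vecok :: "nat \<Rightarrow> mpvec \<Rightarrow> bool" where
  "vecok n v \<longleftrightarrow> (\<forall>j\<in>{1..n}. v j \<noteq> \<infinity>)"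

lemma ereal_add_ne_inf: "(a::ereal) \<noteq> \<infinity> \<Longrightarrow> b \<noteq> \<infinity> \<Longrightarrow> a + b \<noteq> \<infinity>"
  by (cases a; cases b) auto

lemma max_add_ereal: "max (a::ereal) b + c = max (a + c) (b + c)"
  by (cases "a \<le> b") (auto simp: max_def add_right_mono antisym)

lemma add_max_ereal: "c + max (a::ereal) b = max (c + a) (c + b)"
  using max_add_ereal[of a b c] by (simp add: add.commute)

lemma minf_add: "x \<noteq> \<infinity> \<Longrightarrow> -\<infinity> + (x::ereal) = -\<infinity>"
  by (cases x) auto

lemma mult_ok: assumes "matok n X" "matok n Y" shows "matok n (mp_mult n X Y)"
  unfolding matok_def mp_mult_def
proof (intro ballI)
  fix i j assume "i \<in> {1..n}" "j \<in> {1..n}"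
  then show "(SUP k\<in>{1..n}. X i k + Y k j) \<noteq> \<infinity>" using assms
    by (intro SUP_ne_inf) (auto simp: matok_def intro!: ereal_add_ne_inf)
qed

lemma add_ok: "matok n X \<Longrightarrow> matok n Y \<Longrightarrow> matok n (mp_add X Y)"
  unfolding matok_def mp_add_def by (auto simp: max_def)

lemma id_ok: "matok n mp_id"
  unfolding matok_def mp_id_def by auto

lemma pow_ok: "matok n X \<Longrightarrow> matok n (mp_pow n X q)"
  by (induction q) (auto simp: id_ok mult_ok)

lemma multvec_ok: assumes "matok n X" "vecok n v" shows "vecok n (mp_mult_vec n X v)"
  unfolding vecok_def mp_mult_vec_def
proof (intro ballI)
  fix i assume "i \<in> {1..n}"
  then show "(SUP j\<in>{1..n}. X i j + v j) \<noteq> \<infinity>" using assms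
    by (intro SUP_ne_inf) (auto simp: matok_def vecok_def intro!: ereal_add_ne_inf)
qed

lemma vec_cong: "(\<forall>j\<in>{1..n}. v j = w j) \<Longrightarrow> mp_mult_vec n X v i = mp_mult_vec n X w i"
  unfolding mp_mult_vec_def by (rule SUP_cong[OF refl]) auto

lemma assoc:
  assumes "matok n X" "matok n Y" "vecok n v" "i \<in> {1..n}"
  shows "mp_mult_vec n (mp_mult n X Y) v i = mp_mult_vec n X (mp_mult_vec n Y v) i"
proof -
  have "mp_mult_vec n (mp_mult n X Y) v i = (SUP j\<in>{1..n}. SUP k\<in>{1..n}. X i k + Y k j + v j)"
    unfolding mp_mult_vec_def mp_mult_def
    by (rule SUP_cong[OF refl], rule SUP_add_right) (use assms(3) in \<open>auto simp: vecok_def\<close>)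
  also have "\<dots> = (SUP k\<in>{1..n}. SUP j\<in>{1..n}. X i k + (Y k j + v j))"
    by (subst SUP_commute) (simp add: add.assoc)
  also have "\<dots> = mp_mult_vec n X (mp_mult_vec n Y v) i"
    unfolding mp_mult_vec_def
    by (rule SUP_cong[OF refl], rule SUP_add_left[symmetric]) (use assms(1,4) in \<open>auto simp: matok_def\<close>)
  finally show ?thesis .
qed

lemma vec_add: "mp_mult_vec n (mp_add X Y) v i = max (mp_mult_vec n X v i) (mp_mult_vec n Y v i)"
  unfolding mp_mult_vec_def mp_add_def max_add_ereal
  by (rule SUP_max)

lemma vec_max: "mp_mult_vec n X (\<lambda>j. max (v j) (w j)) i = max (mp_mult_vec n X v i) (mp_mult_vec n X w i)"
  unfolding mp_mult_vec_def add_max_ereal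
  by (rule SUP_max)

lemma vec_mono: "(\<forall>j\<in>{1..n}. v j \<le> w j) \<Longrightarrow> mp_mult_vec n X v i \<le> mp_mult_vec n X w i"
  unfolding mp_mult_vec_def by (intro SUP_subset_mono) (auto intro: add_left_mono)

lemma vec_id:
  assumes "vecok n v" "i \<in> {1..n}"
  shows "mp_mult_vec n mp_id v i = v i"
proof -
  have "mp_mult_vec n mp_id v i = (SUP j\<in>{1..n}. if i = j then v j else -\<infinity>)"
    unfolding mp_mult_vec_def mp_id_def
    by (rule SUP_cong[OF refl]) (use assms(1) in \<open>auto simp: vecok_def minf_add\<close>)
  also have "\<dots> = (SUP j\<in>{j\<in>{1..n}. i = j}. v j)" by (rule SUP_if_bot)
  also have "{j\<in>{1..n}. i = j} = {i}" using assms(2) by auto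
  finally show ?thesis by simp
qed

lemma vec_SUP:
  assumes "finite S" "matok n X" "\<forall>m\<in>S. vecok n (w m)" "i \<in> {1..n}"
  shows "(SUP m\<in>S. mp_mult_vec n X (w m) i) = mp_mult_vec n X (\<lambda>j. SUP m\<in>S. w m j) i"
proof -
  have "mp_mult_vec n X (\<lambda>j. SUP m\<in>S. w m j) i = (SUP j\<in>{1..n}. SUP m\<in>S. X i j + w m j)"
    unfolding mp_mult_vec_def
    by (rule SUP_cong[OF refl], rule SUP_add_left) (use assms in \<open>auto simp: matok_def\<close>)
  also have "\<dots> = (SUP m\<in>S. mp_mult_vec n X (w m) i)"
    unfolding mp_mult_vec_def by (rule SUP_commute)
  finally show ?thesis by simp
qed

lemma vec_bot:
  assumes "\<forall>j\<in>{1..n}. X i j = -\<infinity>" "vecok n v"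
  shows "mp_mult_vec n X v i = -\<infinity>"
proof -
  have "mp_mult_vec n X v i = (SUP j\<in>{1..n}. -\<infinity>)"
    unfolding mp_mult_vec_def by (rule SUP_cong[OF refl]) (use assms in \<open>auto simp: vecok_def minf_add\<close>)
  then show ?thesis by (cases "{1..n} = {}") (auto simp: bot_ereal_def)
qed

lemma Tdiag_ok: "matok n (Tdiag \<tau> k)" unfolding matok_def Tdiag_def by auto
lemma Gmat_ok: "matok n (Gmat A r m)" unfolding matok_def Gmat_def by auto
lemma transpose_ok: "matok n X \<Longrightarrow> matok n (mp_transpose X)"
  unfolding matok_def mp_transpose_def by auto

lemma Tdiag_mult:
  assumes "matok n Y" "i \<in> {1..n}" "j \<in> {1..n}"
  shows "mp_mult n (Tdiag \<tau> k) Y i j = ereal (\<tau> i k) + Y i j"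
proof -
  have "mp_mult n (Tdiag \<tau> k) Y i j = (SUP l\<in>{1..n}. if i = l then ereal (\<tau> i k) + Y l j else -\<infinity>)"
    unfolding mp_mult_def Tdiag_def
    by (rule SUP_cong[OF refl]) (use assms in \<open>auto simp: matok_def minf_add\<close>)
  also have "\<dots> = (SUP l\<in>{l\<in>{1..n}. i = l}. ereal (\<tau> i k) + Y l j)" by (rule SUP_if_bot)
  also have "{l\<in>{1..n}. i = l} = {i}" using assms(2) by auto
  finally show ?thesis by simp
qed



lemma Tdiag_vec:
  assumes "vecok n u" "i \<in> {1..n}"
  shows "mp_mult_vec n (Tdiag \<tau> k) u i = ereal (\<tau> i k) + u i"
proof -
  have "mp_mult_vec n (Tdiag \<tau> k) u i = (SUP l\<in>{1..n}. if i = l then ereal (\<tau> i k) + u l else -\<infinity>)"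
    unfolding mp_mult_vec_def Tdiag_def
    by (rule SUP_cong[OF refl]) (use assms in \<open>auto simp: vecok_def minf_add\<close>)
  also have "\<dots> = (SUP l\<in>{l\<in>{1..n}. i = l}. ereal (\<tau> i k) + u l)" by (rule SUP_if_bot)
  also have "{l\<in>{1..n}. i = l} = {i}" using assms(2) by auto
  finally show ?thesis by simp
qed

lemma TZ_vec:
  assumes "matok n Z" "vecok n w" "i \<in> {1..n}"
  shows "mp_mult_vec n (mp_mult n (Tdiag \<tau> k) Z) w i = ereal (\<tau> i k) + mp_mult_vec n Z w i"
  using assms by (simp add: assoc Tdiag_ok Tdiag_vec multvec_ok)

lemma SUP_exists_ne:
  fixes f :: "'a \<Rightarrow> ereal"
  assumes "(SUP s\<in>S. f s) \<noteq> -\<infinity>"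
  shows "\<exists>s\<in>S. f s \<noteq> -\<infinity>"
proof (rule ccontr)
  assume "\<not> ?thesis"
  then have "(SUP s\<in>S. f s) \<le> -\<infinity>" by (intro SUP_least) auto
  then show False using assms by simp
qed

lemma pow_path:
  assumes X: "matok n X" and XG: "\<forall>i\<in>{1..n}. \<forall>j\<in>{1..n}. X i j \<noteq> -\<infinity> \<longrightarrow> G j i \<noteq> -\<infinity>"
  shows "i \<in> {1..n} \<Longrightarrow> j \<in> {1..n} \<Longrightarrow> mp_pow n X q i j \<noteq> -\<infinity> \<Longrightarrow>
     \<exists>vs. mp_path n G vs \<and> length vs = Suc q \<and> last vs = i"
proof (induction q arbitrary: i)
  case 0
  then have "i = j" by (auto simp: mp_id_def split: if_splits)
  then show ?case using 0 by (intro exI[of _ "[i]"]) (auto simp: mp_path_def)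
next
  case (Suc q)
  have "(SUP k\<in>{1..n}. X i k + mp_pow n X q k j) \<noteq> -\<infinity>"
    using Suc.prems by (simp add: mp_mult_def)
  then obtain k where k: "k \<in> {1..n}" "X i k + mp_pow n X q k j \<noteq> -\<infinity>"
    using SUP_exists_ne by blast
  have f1: "X i k \<noteq> \<infinity>" using X k Suc.prems by (auto simp: matok_def)
  have f2: "mp_pow n X q k j \<noteq> \<infinity>" using pow_ok[OF X] k Suc.prems by (auto simp: matok_def)
  have n1: "X i k \<noteq> -\<infinity>" using k(2) f2 by (auto simp: minf_add)
  have n2: "mp_pow n X q k j \<noteq> -\<infinity>" using k(2) f1 by (cases "X i k") auto
  obtain vs where vs: "mp_path n G vs" "length vs = Suc q" "last vs = k"
    using Suc.IH[OF k(1) Suc.prems(2) n2] by blast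
  have Gki: "G k i \<noteq> -\<infinity>" using XG Suc.prems(1) k(1) n1 by blast
  have "mp_path n G (vs @ [i])"
    unfolding mp_path_def
  proof (intro conjI allI impI)
    show "vs @ [i] \<noteq> []" by simp
    show "set (vs @ [i]) \<subseteq> {1..n}" using vs(1) Suc.prems(1) by (auto simp: mp_path_def)
    fix l assume l: "Suc l < length (vs @ [i])"
    show "G ((vs @ [i]) ! l) ((vs @ [i]) ! Suc l) \<noteq> -\<infinity>"
    proof (cases "Suc l < length vs")
      case True
      then show ?thesis using vs(1) by (auto simp: mp_path_def nth_append)
    next
      case False
      then have "l = length vs - 1" "Suc l = length vs" using l by auto
      moreover have "vs ! (length vs - 1) = k" using vs by (metis last_conv_nth list.size(3) nat.simps(3))
      ultimately show ?thesis using Gki vs(2) by (auto simp: nth_append)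
    qed
  qed
  then show ?case using vs by (intro exI[of _ "vs @ [i]"]) auto
qed

lemma pow_zero:
  assumes X: "matok n X" and XG: "\<forall>i\<in>{1..n}. \<forall>j\<in>{1..n}. X i j \<noteq> -\<infinity> \<longrightarrow> G j i \<noteq> -\<infinity>"
    and L: "longest_path_length n G p" and ij: "i \<in> {1..n}" "j \<in> {1..n}"
  shows "mp_pow n X (Suc p) i j = -\<infinity>"
proof (rule ccontr)
  assume "mp_pow n X (Suc p) i j \<noteq> -\<infinity>"
  then obtain vs where "mp_path n G vs" "length vs = Suc (Suc p)"
    using pow_path[OF X XG ij] by blast
  then show False using L by (auto simp: longest_path_length_def)
qed



lemma Mfin_ge:
  assumes "i \<in> {1..n}" "r i = enat m0"
  shows "m0 \<le> Mfin n r"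
proof -
  have eq: "{the_enat (r i) | i. i \<in> {1..n} \<and> r i \<noteq> \<infinity>} = (\<lambda>i. the_enat (r i)) ` {i\<in>{1..n}. r i \<noteq> \<infinity>}"
    by auto
  have "m0 \<in> {0} \<union> {the_enat (r i) | i. i \<in> {1..n} \<and> r i \<noteq> \<infinity>}"
    using assms by force
  moreover have "finite ({0} \<union> {the_enat (r i) | i. i \<in> {1..n} \<and> r i \<noteq> \<infinity>})"
    unfolding eq by simp
  ultimately show ?thesis unfolding Mfin_def by (rule Max_ge[rotated])
qed

theorem theorem2:
  fixes n :: nat and A :: "(nat \<times> nat) set" and r :: "nat \<Rightarrow> enat"
    and \<tau> :: "nat \<Rightarrow> nat \<Rightarrow> real" and d :: "nat \<Rightarrow> int \<Rightarrow> ereal" and p :: nat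
  assumes arcs: "A \<subseteq> {1..n} \<times> {1..n}"
    and r_inf: "\<forall>i\<in>{1..n}. r i = \<infinity> \<longleftrightarrow> preds A i = {}"
    and tau_pos: "\<forall>i\<in>{1..n}. \<forall>k\<ge>1. \<tau> i k > 0"
    and d_zero: "\<forall>i\<in>{1..n}. d i 0 = 0"
    and d_neg: "\<forall>i\<in>{1..n}. \<forall>k<0. d i k = -\<infinity>"
    and d_range: "\<forall>i\<in>{1..n}. \<forall>k\<ge>1. d i k \<noteq> \<infinity>"
    and d_rec: "\<forall>i\<in>{1..n}. \<forall>k\<ge>1.
        d i (int k) = max (ereal (\<tau> i k) + arrival A r d i k) (ereal (\<tau> i k) + d i (int k - 1))"
    and acyc: "mp_acyclic n (Gmat A r 0)"
    and longest: "longest_path_length n (Gmat A r 0) p"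
  shows "\<forall>k\<ge>1. \<forall>i\<in>{1..n}.
     d i (int k) = (SUP m\<in>{1..max (Mfin n r) 1}.
                      mp_mult_vec n (Tm n A r \<tau> p m k) (\<lambda>j. d j (int k - int m)) i)"
proof (intro allI impI ballI)
  fix k :: nat and i :: nat
  assume k: "k \<ge> 1" and i: "i \<in> {1..n}"
  define T where "T = Tdiag \<tau> k"
  define G where "G m = Gmat A r m" for m
  define B where "B = mp_mult n T (mp_transpose (G 0))"
  define C where "C = mp_add mp_id B"
  define M' where "M' = max (Mfin n r) 1"
  define Y where "Y m = (if m = 1 then mp_add mp_id (mp_transpose (G 1)) else mp_transpose (G m))" for m
  define v where "v m = (\<lambda>j. d j (int k - int m))" for m :: nat
  define D where "D = v 0"
  define b where "b = (\<lambda>i. SUP m\<in>{1..M'}. mp_mult_vec n (mp_mult n T (Y m)) (v m) i)"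
  define cb where "cb q = mp_mult_vec n (mp_pow n C q) b" for q
  define g where "g m i = mp_mult_vec n (mp_transpose (G m)) (v m) i" for m i

  have dok: "\<forall>j\<in>{1..n}. \<forall>z. d j z \<noteq> \<infinity>"
  proof (intro ballI allI)
    fix j z assume j: "j \<in> {1..n}"
    show "d j z \<noteq> \<infinity>"
      using d_range d_zero d_neg j by (cases "z \<ge> 1"; cases "z = 0") auto
  qed
  have vok: "vecok n (v m)" for m using dok by (simp add: vecok_def v_def)
  have Dok: "vecok n D" using vok by (simp add: D_def)
  have Tok: "matok n T" by (simp add: T_def Tdiag_ok)
  have Gtok: "matok n (mp_transpose (G m))" for m by (simp add: G_def Gmat_ok transpose_ok)
  have Bok: "matok n B" unfolding B_def using Tok Gtok by (rule mult_ok)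
  have Cok: "matok n C" unfolding C_def using id_ok Bok by (rule add_ok)
  have Yok: "matok n (Y m)" for m by (simp add: Y_def Gtok add_ok id_ok)
  have bok: "vecok n b"
    unfolding vecok_def b_def
  proof
    fix i assume "i \<in> {1..n}"
    then show "(SUP m\<in>{1..M'}. mp_mult_vec n (mp_mult n T (Y m)) (v m) i) \<noteq> \<infinity>"
      using multvec_ok[OF mult_ok[OF Tok Yok] vok] by (intro SUP_ne_inf) (auto simp: vecok_def)
  qed
  have cbok: "vecok n (cb q)" for q unfolding cb_def by (rule multvec_ok[OF pow_ok[OF Cok] bok])

  have Tm_eq: "Tm n A r \<tau> p m k = mp_mult n (mp_pow n C p) (mp_mult n T (Y m))" for m
    by (simp add: Tm_def C_def B_def T_def Y_def G_def)
  have target: "(SUP m\<in>{1..M'}. mp_mult_vec n (Tm n A r \<tau> p m k) (\<lambda>j. d j (int k - int m)) i) = cb p i"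
  proof -
    have "(SUP m\<in>{1..M'}. mp_mult_vec n (Tm n A r \<tau> p m k) (\<lambda>j. d j (int k - int m)) i)
        = (SUP m\<in>{1..M'}. mp_mult_vec n (mp_pow n C p) (mp_mult_vec n (mp_mult n T (Y m)) (v m)) i)"
      unfolding Tm_eq v_def[symmetric]
      by (rule SUP_cong[OF refl]) (use i in \<open>simp add: assoc pow_ok Cok mult_ok Tok Yok vok\<close>)
    also have "\<dots> = cb p i"
      unfolding cb_def b_def
      by (rule vec_SUP) (use i in \<open>auto intro: pow_ok Cok multvec_ok mult_ok Tok Yok vok\<close>)
    finally show ?thesis .
  qed

  have g_eq: "g m i = (if r i = enat m then (SUP j\<in>preds A i. d j (int k - int m)) else -\<infinity>)"
    if i: "i \<in> {1..n}" for m i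
  proof -
    have "g m i = (SUP j\<in>{1..n}. if j \<in> preds A i \<and> r i = enat m then v m j else -\<infinity>)"
      unfolding g_def mp_mult_vec_def mp_transpose_def G_def Gmat_def
      by (rule SUP_cong[OF refl]) (use vok in \<open>auto simp: vecok_def minf_add\<close>)
    also have "\<dots> = (SUP j\<in>{j\<in>{1..n}. j \<in> preds A i \<and> r i = enat m}. v m j)" by (rule SUP_if_bot)
    also have "{j\<in>{1..n}. j \<in> preds A i \<and> r i = enat m} = (if r i = enat m then preds A i else {})"
      using arcs by (auto simp: preds_def)
    finally show ?thesis by (simp add: v_def bot_ereal_def)
  qed
  have arr: "arrival A r d i k = max (g 0 i) (SUP m\<in>{1..M'}. g m i)" if i: "i \<in> {1..n}" for i
  proof -
    have split: "{0..M'} = insert 0 {1..M'}" by auto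
    have "max (g 0 i) (SUP m\<in>{1..M'}. g m i) = (SUP m\<in>{0..M'}. g m i)"
      unfolding split by (simp add: sup_max)
    also have "\<dots> = arrival A r d i k"
    proof (cases "r i")
      case (enat m0)
      have m0: "m0 \<le> M'" using Mfin_ge[of i n r m0] i enat by (simp add: M'_def)
      have "r i \<noteq> \<infinity>" using enat by simp
      then have pne: "preds A i \<noteq> {}" using bspec[OF r_inf i] by simp
      have "(SUP m\<in>{0..M'}. g m i) = (SUP m\<in>{0..M'}. if m0 = m then (SUP j\<in>preds A i. d j (int k - int m)) else -\<infinity>)"
        by (rule SUP_cong[OF refl]) (simp add: g_eq[OF i] enat)
      also have "\<dots> = (SUP m\<in>{m\<in>{0..M'}. m0 = m}. (SUP j\<in>preds A i. d j (int k - int m)))"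
        by (rule SUP_if_bot)
      also have "{m\<in>{0..M'}. m0 = m} = {m0}" using m0 by auto
      finally show ?thesis using pne by (simp add: arrival_def enat)
    next
      case infinity
      have pe: "preds A i = {}" using r_inf i infinity by auto
      have "(SUP m\<in>{0..M'}. g m i) = (SUP m\<in>{0..M'}. -\<infinity>)"
        by (rule SUP_cong[OF refl]) (simp add: g_eq[OF i] infinity)
      then show ?thesis using pe by (simp add: arrival_def)
    qed
    finally show ?thesis by simp
  qed
  have FP: "D i = max (mp_mult_vec n B D i) (b i)" if i: "i \<in> {1..n}" for i
  proof -
    have BD: "mp_mult_vec n B D i = ereal (\<tau> i k) + g 0 i"
      unfolding B_def T_def g_def D_def using Gtok vok i by (rule TZ_vec)
    have Yv: "mp_mult_vec n (Y m) (v m) i = (if m = 1 then max (v 1 i) (g 1 i) else g m i)" for m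
      using i vok by (simp add: Y_def g_def vec_add vec_id)
    have "b i = (SUP m\<in>{1..M'}. ereal (\<tau> i k) + mp_mult_vec n (Y m) (v m) i)"
      unfolding b_def T_def
      by (rule SUP_cong[OF refl]) (use Yok vok i in \<open>simp add: TZ_vec\<close>)
    also have "\<dots> = ereal (\<tau> i k) + (SUP m\<in>{1..M'}. mp_mult_vec n (Y m) (v m) i)"
      by (rule SUP_add_left[symmetric]) auto
    also have "(SUP m\<in>{1..M'}. mp_mult_vec n (Y m) (v m) i)
        = (SUP m\<in>{1..M'}. max (if m = 1 then v 1 i else -\<infinity>) (g m i))"
      by (rule SUP_cong[OF refl]) (simp add: Yv)
    also have "\<dots> = max (SUP m\<in>{1..M'}. if m = 1 then v 1 i else -\<infinity>) (SUP m\<in>{1..M'}. g m i)"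
      by (rule SUP_max)
    also have "(SUP m\<in>{1..M'}. if m = 1 then v 1 i else -\<infinity>) = (SUP m\<in>{m\<in>{1..M'}. m = 1}. v 1 i)"
      by (rule SUP_if_bot)
    also have "{m\<in>{1..M'}. m = 1} = {1}" by (auto simp: M'_def)
    finally have bi: "b i = ereal (\<tau> i k) + max (v 1 i) (SUP m\<in>{1..M'}. g m i)" by simp
    have "D i = max (ereal (\<tau> i k) + arrival A r d i k) (ereal (\<tau> i k) + v 1 i)"
      using d_rec i k by (simp add: D_def v_def)
    also have "\<dots> = ereal (\<tau> i k) + max (max (g 0 i) (SUP m\<in>{1..M'}. g m i)) (v 1 i)"
      by (simp add: arr[OF i] add_max_ereal)
    also have "\<dots> = max (ereal (\<tau> i k) + g 0 i) (ereal (\<tau> i k) + max (v 1 i) (SUP m\<in>{1..M'}. g m i))"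
      by (simp add: add_max_ereal max.commute max.left_commute)
    finally show ?thesis by (simp add: BD bi)
  qed

  have stepC: "cb (Suc q) i = max (cb q i) (mp_mult_vec n B (cb q) i)" if i: "i \<in> {1..n}" for q i
  proof -
    have "cb (Suc q) i = mp_mult_vec n C (cb q) i"
      unfolding cb_def using Cok pow_ok[OF Cok] bok i by (simp add: assoc)
    also have "\<dots> = max (cb q i) (mp_mult_vec n B (cb q) i)"
      unfolding C_def using cbok i by (simp add: vec_add vec_id)
    finally show ?thesis .
  qed
  have cb0: "cb 0 i = b i" if i: "i \<in> {1..n}" for i
    unfolding cb_def using bok i by (simp add: vec_id)
  have lower: "\<forall>i\<in>{1..n}. b i \<le> cb q i" for q
  proof (induction q)
    case 0 then show ?case by (simp add: cb0)
  next
    case (Suc q) then show ?case by (simp add: stepC le_max_iff_disj)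
  qed
  have upper: "\<forall>i\<in>{1..n}. cb q i \<le> D i" for q
  proof (induction q)
    case 0 then show ?case using FP by (simp add: cb0)
  next
    case (Suc q)
    show ?case
    proof
      fix i assume i: "i \<in> {1..n}"
      have "mp_mult_vec n B (cb q) i \<le> mp_mult_vec n B D i"
        using Suc.IH by (rule vec_mono)
      also have "\<dots> \<le> D i" using FP[OF i] by simp
      finally show "cb (Suc q) i \<le> D i" using Suc.IH i by (simp add: stepC)
    qed
  qed
  have Q2: "\<forall>i\<in>{1..n}. D i \<le> max (mp_mult_vec n (mp_pow n B (Suc q)) D i) (cb q i)" for q
  proof (induction q)
    case 0
    show ?case
    proof
      fix i assume i: "i \<in> {1..n}"
      have "mp_mult_vec n (mp_pow n B (Suc 0)) D i = mp_mult_vec n B (mp_mult_vec n mp_id D) i"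
        using Bok id_ok Dok i by (simp add: assoc)
      also have "\<dots> = mp_mult_vec n B D i"
        by (rule vec_cong) (use Dok in \<open>simp add: vec_id\<close>)
      finally show "D i \<le> max (mp_mult_vec n (mp_pow n B (Suc 0)) D i) (cb 0 i)"
        using FP[OF i] cb0[OF i] by simp
    qed
  next
    case (Suc q)
    show ?case
    proof
      fix i assume i: "i \<in> {1..n}"
      have "D i = max (mp_mult_vec n B D i) (b i)" by (rule FP[OF i])
      also have "\<dots> \<le> max (mp_mult_vec n B (\<lambda>j. max (mp_mult_vec n (mp_pow n B (Suc q)) D j) (cb q j)) i) (b i)"
        by (rule max.mono[OF vec_mono[OF Suc.IH] order_refl])
      also have "\<dots> = max (max (mp_mult_vec n B (mp_mult_vec n (mp_pow n B (Suc q)) D) i)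
                               (mp_mult_vec n B (cb q) i)) (b i)"
        by (simp add: vec_max)
      also have "mp_mult_vec n B (mp_mult_vec n (mp_pow n B (Suc q)) D) i
                 = mp_mult_vec n (mp_pow n B (Suc (Suc q))) D i"
        unfolding mp_pow.simps(2)[of n B "Suc q"] by (rule assoc[OF Bok pow_ok[OF Bok] Dok i, symmetric])
      also have "max (max (mp_mult_vec n (mp_pow n B (Suc (Suc q))) D i) (mp_mult_vec n B (cb q) i)) (b i)
          \<le> max (mp_mult_vec n (mp_pow n B (Suc (Suc q))) D i) (cb (Suc q) i)"
      proof -
        have h1: "mp_mult_vec n B (cb q) i \<le> cb (Suc q) i" using stepC[OF i, of q] by simp
        have h2: "b i \<le> cb (Suc q) i" using lower[of "Suc q"] i by blast
        show ?thesis by (intro max.boundedI max.cobounded1 max.coboundedI2 h1 h2)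
      qed
      finally show "D i \<le> max (mp_mult_vec n (mp_pow n B (Suc (Suc q))) D i) (cb (Suc q) i)" .
    qed
  qed
  have BG: "\<forall>i\<in>{1..n}. \<forall>j\<in>{1..n}. B i j \<noteq> -\<infinity> \<longrightarrow> G 0 j i \<noteq> -\<infinity>"
  proof (intro ballI impI)
    fix i j assume ij: "i \<in> {1..n}" "j \<in> {1..n}" and ne: "B i j \<noteq> -\<infinity>"
    have "B i j = ereal (\<tau> i k) + G 0 j i"
      unfolding B_def T_def using Gtok ij by (simp add: Tdiag_mult mp_transpose_def)
    then show "G 0 j i \<noteq> -\<infinity>" using ne by auto
  qed
  have "mp_mult_vec n (mp_pow n B (Suc p)) D i = -\<infinity>"
    using pow_zero[OF Bok BG longest[folded G_def] i] Dok by (intro vec_bot) auto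
  then have "D i \<le> cb p i" using Q2[of p, rule_format, OF i] by simp
  then have "D i = cb p i" using upper[of p] i by (auto intro: antisym)
  then show "d i (int k) = (SUP m\<in>{1..max (Mfin n r) 1}.
                      mp_mult_vec n (Tm n A r \<tau> p m k) (\<lambda>j. d j (int k - int m)) i)"
    using target by (simp add: D_def v_def M'_def)
qed

end
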